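(* Let $N\ge1$ be an integer, $d>0$, $T\ge (N+1)d$, and $0\le s_1\le\dots\le s_N$. Let $\bar x_1,\dots,\bar x_{N+1}$ be the output of the Inter-Update Balancing Algorithm defined in the context. Then the sequence $\{\bar x_i\}_{i=1}^N$ is non-increasing. Moreover, $\bar x_j>\bar x_{j+1}$ holds only if $\sum_{i=1}^j\bar x_i=s_j+jd$.
   Context: Inter-Update Balancing Algorithm. Set $s_0:=0$, $s_{N+1}:=T-d$, and $i_0:=0$. For $k=0,1,2,\dots$, while $i_k<N+1$, do the following. 1. Compute $M_k=\max_{i_k<j\le N+1}\frac{s_j-s_{i_k}}{j-i_k}$. 2. Let $i_{k+1}$ be the largest index $j\in\{i_k+1,\dots,N+1\}$ attaining this maximum. 3. Set $\bar x_i=M_k+d$ for all $i_k<i\le i_{k+1}$. The algorithm stops once $i_{k+1}=N+1$. For example, the first step computes the maximum of $\{s_1,s_2/2,\dots,s_N/N,(T-d)/(N+1)\}$. *)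

theory Defs
  imports Complex_Main
begin

definition sext :: "(nat \<Rightarrow> real) \<Rightarrow> nat \<Rightarrow> real \<Rightarrow> real \<Rightarrow> nat \<Rightarrow> real" where
  "sext s N T d j = (if j = 0 then 0 else if j = N + 1 then T - d else s j)"

definition slope :: "(nat \<Rightarrow> real) \<Rightarrow> nat \<Rightarrow> real \<Rightarrow> real \<Rightarrow> nat \<Rightarrow> nat \<Rightarrow> real" where
  "slope s N T d i j = (sext s N T d j - sext s N T d i) / (real j - real i)"

text \<open>M_k as a function of the current index i_k.\<close>
definition Mval :: "(nat \<Rightarrow> real) \<Rightarrow> nat \<Rightarrow> real \<Rightarrow> real \<Rightarrow> nat \<Rightarrow> real" where
  "Mval s N T d i = Max (slope s N T d i ` {i<..N+1})"

text \<open>The indices i_k (constant N+1 once the algorithm has stopped).\<close>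
primrec ibar :: "(nat \<Rightarrow> real) \<Rightarrow> nat \<Rightarrow> real \<Rightarrow> real \<Rightarrow> nat \<Rightarrow> nat" where
  "ibar s N T d 0 = 0"
| "ibar s N T d (Suc k) =
     (let i = ibar s N T d k in
      if i < N + 1 then (GREATEST j. j \<in> {i<..N+1} \<and> slope s N T d i j = Mval s N T d i)
      else i)"

text \<open>Output: xbar_i = M_k + d for the unique k with i_k < i <= i_{k+1}.\<close>
definition xbar :: "(nat \<Rightarrow> real) \<Rightarrow> nat \<Rightarrow> real \<Rightarrow> real \<Rightarrow> nat \<Rightarrow> real" where
  "xbar s N T d i =
     (let k = (LEAST k. i \<le> ibar s N T d (Suc k)) in Mval s N T d (ibar s N T d k) + d)"

end

theory Submission
  imports Defs
begin

context
  fixes s :: "nat \<Rightarrow> real" and N :: nat and T d :: real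
begin

lemma M_props:
  assumes "i < N + 1"
  shows "\<exists>j\<in>{i<..N+1}. slope s N T d i j = Mval s N T d i"
    and "\<And>j. j \<in> {i<..N+1} \<Longrightarrow> slope s N T d i j \<le> Mval s N T d i"
proof -
  have ne: "slope s N T d i ` {i<..N+1} \<noteq> {}" using assms by auto
  show "\<exists>j\<in>{i<..N+1}. slope s N T d i j = Mval s N T d i"
    using Max_in[OF _ ne] unfolding Mval_def by force
  show "\<And>j. j \<in> {i<..N+1} \<Longrightarrow> slope s N T d i j \<le> Mval s N T d i"
    unfolding Mval_def by (rule Max_ge) auto
qed

lemma G_props:
  assumes "i < N + 1"
  defines "g \<equiv> (GREATEST j. j \<in> {i<..N+1} \<and> slope s N T d i j = Mval s N T d i)"
  shows "i < g" "g \<le> N + 1" "slope s N T d i g = Mval s N T d i"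
proof -
  obtain j where j: "j \<in> {i<..N+1}" "slope s N T d i j = Mval s N T d i"
    using M_props(1)[OF assms(1)] by blast
  have bnd: "\<forall>y. y \<in> {i<..N+1} \<and> slope s N T d i y = Mval s N T d i \<longrightarrow> y \<le> N + 1" by auto
  have "g \<in> {i<..N+1} \<and> slope s N T d i g = Mval s N T d i"
    unfolding g_def by (rule GreatestI_nat[where k=j and b="N+1"]) (use j bnd in auto)
  then show "i < g" "g \<le> N + 1" "slope s N T d i g = Mval s N T d i" by auto
qed

lemma I_le: "ibar s N T d k \<le> N + 1"
proof (induction k)
  case 0 then show ?case by simp
next
  case (Suc k)
  then show ?case using G_props(2)[of "ibar s N T d k"] by (auto simp: Let_def)
qed

lemma I_step: "ibar s N T d k < N + 1 \<Longrightarrow> ibar s N T d k < ibar s N T d (Suc k)"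
  using G_props(1)[of "ibar s N T d k"] by (auto simp: Let_def)

lemma I_stop: "ibar s N T d k = N + 1 \<Longrightarrow> ibar s N T d (Suc k) = N + 1"
  by (simp add: Let_def)

lemma I_suc_mono: "ibar s N T d k \<le> ibar s N T d (Suc k)"
  using I_step[of k] I_stop[of k] I_le[of k] by linarith

lemma I_mono: "k \<le> k' \<Longrightarrow> ibar s N T d k \<le> ibar s N T d k'"
  using lift_Suc_mono_le[of "ibar s N T d", OF I_suc_mono] by blast

lemma I_min: "min k (N+1) \<le> ibar s N T d k"
proof (induction k)
  case 0 then show ?case by simp
next
  case (Suc k)
  then show ?case using I_step[of k] I_stop[of k] I_le[of k] by linarith
qed

lemma I_end: "ibar s N T d (N+1) = N + 1"
  using I_min[of "N+1"] I_le[of "N+1"] by simp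

lemma I_slope: "ibar s N T d k < N + 1 \<Longrightarrow>
   slope s N T d (ibar s N T d k) (ibar s N T d (Suc k)) = Mval s N T d (ibar s N T d k)"
  using G_props(3)[of "ibar s N T d k"] by (auto simp: Let_def)

lemma M_step:
  assumes "ibar s N T d (Suc k) < N + 1"
  shows "Mval s N T d (ibar s N T d (Suc k)) \<le> Mval s N T d (ibar s N T d k)"
proof -
  define a where "a = ibar s N T d k"
  define b where "b = ibar s N T d (Suc k)"
  have ab: "a < b" "b < N + 1" using assms I_step[of k] I_suc_mono[of k] unfolding a_def b_def by linarith+
  have a1: "a < N+1" using ab by simp
  have eq: "slope s N T d a b = Mval s N T d a" using I_slope[of k] a1 unfolding a_def b_def by simp
  have key: "slope s N T d b j \<le> Mval s N T d a" if j: "j \<in> {b<..N+1}" for j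
  proof -
    have "slope s N T d a j \<le> Mval s N T d a" using M_props(2)[OF a1] j ab by auto
    then have h1: "sext s N T d j - sext s N T d a \<le> Mval s N T d a * (real j - real a)"
      using j ab unfolding slope_def by (auto simp: divide_le_eq)
    have h2: "sext s N T d b - sext s N T d a = Mval s N T d a * (real b - real a)"
      using eq ab unfolding slope_def by (auto simp: divide_eq_eq)
    have "sext s N T d j - sext s N T d b \<le> Mval s N T d a * (real j - real b)"
      using h1 h2 by (simp add: algebra_simps)
    then show ?thesis using j unfolding slope_def by (auto simp: divide_le_eq)
  qed
  obtain j where "j \<in> {b<..N+1}" "slope s N T d b j = Mval s N T d b"
    using M_props(1)[of b] ab by blast
  then show ?thesis using key unfolding a_def b_def by metis
qed

lemma M_mono:
  assumes "k \<le> k'" "ibar s N T d k' < N + 1"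
  shows "Mval s N T d (ibar s N T d k') \<le> Mval s N T d (ibar s N T d k)"
  using assms
proof (induction k' rule: dec_induct)
  case base then show ?case by simp
next
  case (step m)
  have "ibar s N T d m < N + 1" using step.prems I_suc_mono[of m] by linarith
  then show ?case using step M_step[of m] by linarith
qed

definition blk :: "nat \<Rightarrow> nat" where
  "blk i = (LEAST k. i \<le> ibar s N T d (Suc k))"

lemma blk_props:
  assumes "1 \<le> i" "i \<le> N + 1"
  shows "i \<le> ibar s N T d (Suc (blk i))" "ibar s N T d (blk i) < i"
proof -
  have ex: "i \<le> ibar s N T d (Suc N)" using I_end I_mono[of "N+1" "Suc N"] assms by simp
  show "i \<le> ibar s N T d (Suc (blk i))" unfolding blk_def by (rule LeastI[of _ N]) (rule ex)
  show "ibar s N T d (blk i) < i"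
  proof (cases "blk i")
    case 0 then show ?thesis using assms by simp
  next
    case (Suc m)
    have "\<not> i \<le> ibar s N T d (Suc m)"
    proof
      assume "i \<le> ibar s N T d (Suc m)"
      then have "blk i \<le> m" unfolding blk_def by (rule Least_le)
      then show False using Suc by simp
    qed
    then show ?thesis using Suc by simp
  qed
qed

lemma blk_mono: "i \<le> j \<Longrightarrow> 1 \<le> i \<Longrightarrow> j \<le> N + 1 \<Longrightarrow> blk i \<le> blk j"
  using blk_props(1)[of j] unfolding blk_def[of i] by (intro Least_le) simp

lemma blk_unique: "ibar s N T d k < i \<Longrightarrow> i \<le> ibar s N T d (Suc k) \<Longrightarrow> blk i = k"
proof -
  assume h: "ibar s N T d k < i" "i \<le> ibar s N T d (Suc k)"
  have i1: "1 \<le> i" "i \<le> N+1" using h I_le[of "Suc k"] by auto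
  have le: "blk i \<le> k" unfolding blk_def using h(2) by (rule Least_le)
  have "\<not> blk i < k"
  proof
    assume "blk i < k"
    then have "ibar s N T d (Suc (blk i)) \<le> ibar s N T d k" by (intro I_mono) simp
    then show False using blk_props(1)[OF i1] h(1) by linarith
  qed
  then show ?thesis using le by simp
qed

lemma xbar_eq: "xbar s N T d i = Mval s N T d (ibar s N T d (blk i)) + d"
  unfolding xbar_def blk_def Let_def by simp

lemma sum_I: "(\<Sum>i=1..ibar s N T d m. xbar s N T d i)
   = sext s N T d (ibar s N T d m) + real (ibar s N T d m) * d"
proof (induction m)
  case 0 then show ?case by (simp add: sext_def)
next
  case (Suc m)
  define a where "a = ibar s N T d m"
  define b where "b = ibar s N T d (Suc m)"
  show ?case
  proof (cases "a = N + 1")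
    case True
    then have "b = a" using I_stop[of m] unfolding a_def b_def by simp
    then show ?thesis using Suc unfolding a_def b_def by simp
  next
    case False
    then have a1: "a < N + 1" using I_le[of m] unfolding a_def by simp
    have ab: "a < b" using I_step[of m] a1 unfolding a_def b_def by simp
    have split: "{1..b} = {1..a} \<union> {a<..b}" using ab by auto
    have "(\<Sum>i=1..b. xbar s N T d i) = (\<Sum>i=1..a. xbar s N T d i) + (\<Sum>i\<in>{a<..b}. xbar s N T d i)"
      unfolding split by (rule sum.union_disjoint) auto
    also have "(\<Sum>i\<in>{a<..b}. xbar s N T d i) = (\<Sum>i\<in>{a<..b}. Mval s N T d a + d)"
    proof (rule sum.cong)
      fix i assume "i \<in> {a<..b}"
      then have "blk i = m" using blk_unique[of m i] unfolding a_def b_def by auto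
      then show "xbar s N T d i = Mval s N T d a + d" unfolding xbar_eq a_def by simp
    qed simp
    also have "\<dots> = (real b - real a) * (Mval s N T d a + d)" using ab by (simp add: of_nat_diff)
    also have "Mval s N T d a * (real b - real a) = sext s N T d b - sext s N T d a"
    proof -
      have "slope s N T d a b = Mval s N T d a" using I_slope[of m] a1 unfolding a_def b_def by simp
      then show ?thesis using ab unfolding slope_def by (auto simp: divide_eq_eq)
    qed
    then have "(real b - real a) * (Mval s N T d a + d) = sext s N T d b - sext s N T d a + (real b - real a) * d"
      by (simp add: algebra_simps)
    finally show ?thesis using Suc unfolding a_def b_def by (simp add: algebra_simps)
  qed
qed

end

theorem lemma4:
  fixes s :: "nat \<Rightarrow> real" and N :: nat and T d :: real
  assumes "N \<ge> 1" and "d > 0" and "T \<ge> real (N + 1) * d"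
    and "0 \<le> s 1" and "\<And>i. 1 \<le> i \<Longrightarrow> i < N \<Longrightarrow> s i \<le> s (i + 1)"
  shows "(\<forall>i j. 1 \<le> i \<longrightarrow> i \<le> j \<longrightarrow> j \<le> N \<longrightarrow> xbar s N T d j \<le> xbar s N T d i)
    \<and> (\<forall>j. 1 \<le> j \<longrightarrow> j \<le> N \<longrightarrow> xbar s N T d j > xbar s N T d (j + 1) \<longrightarrow>
          (\<Sum>i=1..j. xbar s N T d i) = s j + real j * d)"
proof (intro conjI allI impI)
  fix i j :: nat assume h: "1 \<le> i" "i \<le> j" "j \<le> N"
  have b: "blk s N T d i \<le> blk s N T d j" using blk_mono h by simp
  have "ibar s N T d (blk s N T d j) < N + 1" using blk_props(2)[where i=j and s=s and N=N and T=T and d=d] h by simp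
  then show "xbar s N T d j \<le> xbar s N T d i"
    unfolding xbar_eq using M_mono[OF b] by simp
next
  fix j :: nat assume h: "1 \<le> j" "j \<le> N" "xbar s N T d (j + 1) < xbar s N T d j"
  have j1: "j \<le> ibar s N T d (Suc (blk s N T d j))" using blk_props(1)[where i=j and s=s and N=N and T=T and d=d] h by simp
  have eqj: "j = ibar s N T d (Suc (blk s N T d j))"
  proof (rule ccontr)
    assume "j \<noteq> ibar s N T d (Suc (blk s N T d j))"
    then have "j + 1 \<le> ibar s N T d (Suc (blk s N T d j))" using j1 by simp
    then have "blk s N T d (j+1) \<le> blk s N T d j" unfolding blk_def[of s N T d "j+1"] by (rule Least_le)
    moreover have "blk s N T d j \<le> blk s N T d (j+1)" using blk_mono h by simp
    ultimately have "blk s N T d (j+1) = blk s N T d j" by simp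
    then show False using h(3) unfolding xbar_eq by simp
  qed
  have "(\<Sum>i=1..j. xbar s N T d i) = sext s N T d j + real j * d"
    using sum_I[of s N T d "Suc (blk s N T d j)"] eqj by simp
  then show "(\<Sum>i=1..j. xbar s N T d i) = s j + real j * d" using h by (simp add: sext_def)
qed

end
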